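(* Let $s\in\mathbb{Z}$ and let $Q\subseteq P$ be non-empty with $\mathrm{diam}_\infty(Q)\le\alpha_s$. Then the set of grid points $a_{\alpha_s}(Q)$ is contained in a face of $\square_{\alpha_s}$. Equivalently, for every simplex $\sigma=\{p_0,\ldots,p_k\}$ of $\mathcal{R}^\infty_{\alpha_s/2}$, the set $\{a_{\alpha_s}(p_0),\ldots,a_{\alpha_s}(p_k)\}$ is contained in a face of $\square_{\alpha_s}$.
   Context: Fix $d\ge1$, $\lambda>0$, $\alpha_s=\lambda2^s$, and let $G_{\alpha_s}\subset\mathbb{R}^d$ be a translate of the grid $\alpha_s\mathbb{Z}^d$. $\square_{\alpha_s}$ is the cubical complex of faces $\prod_j[x_j,x_j+m_j]$ with $x\in G_{\alpha_s}$, $m_j\in\{0,\alpha_s\}$. $P\subset\mathbb{R}^d$ is a finite point set; for $p\in P$, $a_{\alpha_s}(p)$ is the point of $G_{\alpha_s}$ whose Voronoi cell (the cube of side $\alpha_s$ centered at it) contains $p$, assumed unique. $\mathrm{diam}_\infty$ is the diameter in the $L_\infty$-norm. $\mathcal{R}^\infty_\alpha$ denotes the Rips complex of $P$ at scale $2\alpha$ in the $L_\infty$-norm: the simplicial complex whose simplices are the non-empty subsets of $P$ of $L_\infty$-diameter at most $2\alpha$. *)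

theory Defs
  imports "HOL-Analysis.Analysis"
begin

definition grid :: "real \<Rightarrow> real^'d \<Rightarrow> (real^'d) set" where
  "grid alpha t = {g. \<exists>k::int^'d. g = t + (\<chi> i. alpha * of_int (k $ i))}"

definition voronoi_cell :: "real \<Rightarrow> real^'d \<Rightarrow> (real^'d) set" where
  "voronoi_cell alpha g = {p. \<forall>i. \<bar>p $ i - g $ i\<bar> \<le> alpha / 2}"

text \<open>The grid point whose Voronoi cell contains p (meaningful when unique).\<close>
definition grid_assign :: "real \<Rightarrow> real^'d \<Rightarrow> real^'d \<Rightarrow> real^'d" where
  "grid_assign alpha t p = (THE g. g \<in> grid alpha t \<and> p \<in> voronoi_cell alpha g)"

definition cube_face :: "real \<Rightarrow> real^'d \<Rightarrow> real^'d \<Rightarrow> (real^'d) set" where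
  "cube_face alpha x m = {y. \<forall>j. x $ j \<le> y $ j \<and> y $ j \<le> x $ j + m $ j}"

definition is_face :: "real \<Rightarrow> real^'d \<Rightarrow> (real^'d) set \<Rightarrow> bool" where
  "is_face alpha t F \<longleftrightarrow> (\<exists>x m. x \<in> grid alpha t \<and> (\<forall>j. m $ j \<in> {0, alpha}) \<and> F = cube_face alpha x m)"

definition diam_inf :: "(real^'d) set \<Rightarrow> real" where
  "diam_inf Q = Sup {infnorm (p - q) | p q. p \<in> Q \<and> q \<in> Q}"

end

theory Submission
  imports Defs
begin

lemma assign_strict:
  fixes p t :: "real^'d" and alpha :: real
  assumes apos: "alpha > 0"
    and u: "\<exists>!g. g \<in> grid alpha t \<and> p \<in> voronoi_cell alpha g"
  shows "\<exists>k::int^'d. grid_assign alpha t p = t + (\<chi> i. alpha * of_int (k $ i))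
           \<and> (\<forall>j. \<bar>p $ j - (t $ j + alpha * of_int (k $ j))\<bar> < alpha / 2)"
proof -
  let ?g = "grid_assign alpha t p"
  have gp: "?g \<in> grid alpha t \<and> p \<in> voronoi_cell alpha ?g"
    unfolding grid_assign_def using theI'[OF u] .
  then obtain k :: "int^'d" where k: "?g = t + (\<chi> i. alpha * of_int (k $ i))"
    unfolding grid_def by blast
  have cell: "\<forall>j. \<bar>p $ j - ?g $ j\<bar> \<le> alpha / 2" using gp unfolding voronoi_cell_def by blast
  have "\<bar>p $ j - (t $ j + alpha * of_int (k $ j))\<bar> < alpha / 2" for j
  proof (rule ccontr)
    assume "\<not> ?thesis"
    moreover have "\<bar>p $ j - (t $ j + alpha * of_int (k $ j))\<bar> \<le> alpha / 2"
      using cell[rule_format, of j] k by simp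
    ultimately have eq: "\<bar>p $ j - (t $ j + alpha * of_int (k $ j))\<bar> = alpha / 2" by linarith
    define e :: int where "e = (if p $ j - (t $ j + alpha * of_int (k $ j)) > 0 then 1 else -1)"
    define k' :: "int^'d" where "k' = (\<chi> i. if i = j then k $ i + e else k $ i)"
    define g' where "g' = t + (\<chi> i. alpha * of_int (k' $ i))"
    have g'g: "g' \<in> grid alpha t" unfolding grid_def g'_def by blast
    have "\<bar>p $ i - g' $ i\<bar> \<le> alpha / 2" for i
    proof (cases "i = j")
      case True
      then show ?thesis using eq apos unfolding g'_def k'_def e_def
        by (auto simp: abs_if algebra_simps split: if_splits)
    next
      case False
      then show ?thesis using cell k unfolding g'_def k'_def by auto
    qed
    hence "p \<in> voronoi_cell alpha g'" unfolding voronoi_cell_def by blast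
    moreover have "g' \<noteq> ?g"
    proof
      assume "g' = ?g"
      hence "g' $ j = ?g $ j" by simp
      thus False using apos unfolding g'_def k'_def k e_def by (auto split: if_splits)
    qed
    ultimately show False using u gp g'g by blast
  qed
  thus ?thesis using k by blast
qed

theorem lemma6:
  fixes P Q :: "(real^'d) set" and lambda :: real and s :: int and t :: "real^'d"
  defines "alpha \<equiv> lambda * 2 powr (of_int s)"
  assumes "lambda > 0"
    and "finite P"
    and uniq: "\<forall>p\<in>P. \<exists>!g. g \<in> grid alpha t \<and> p \<in> voronoi_cell alpha g"
    and "Q \<subseteq> P" and "Q \<noteq> {}"
    and "diam_inf Q \<le> alpha"
  shows "\<exists>F. is_face alpha t F \<and> grid_assign alpha t ` Q \<subseteq> F"
proof -
  have apos: "alpha > 0" unfolding alpha_def using assms(2) by simp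
  have fQ: "finite Q" using assms(3,5) finite_subset by blast
  have diam: "\<bar>p $ j - q $ j\<bar> \<le> alpha" if "p \<in> Q" "q \<in> Q" for p q j
  proof -
    have fin: "finite {infnorm (p - q) | p q. p \<in> Q \<and> q \<in> Q}"
    proof -
      have "{infnorm (p - q) | p q. p \<in> Q \<and> q \<in> Q} = (\<lambda>(p,q). infnorm (p - q)) ` (Q \<times> Q)" by auto
      thus ?thesis using fQ by simp
    qed
    have "infnorm (p - q) \<le> diam_inf Q" unfolding diam_inf_def
      by (rule cSup_upper) (use that fin in auto)
    moreover have "\<bar>(p - q) $ j\<bar> \<le> infnorm (p - q)" by (rule component_le_infnorm_cart)
    ultimately show ?thesis using assms(7) by simp
  qed
  have "\<forall>q\<in>Q. \<exists>k::int^'d. grid_assign alpha t q = t + (\<chi> i. alpha * of_int (k $ i))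
           \<and> (\<forall>j. \<bar>q $ j - (t $ j + alpha * of_int (k $ j))\<bar> < alpha / 2)"
    using assign_strict[OF apos] uniq assms(5) by blast
  then obtain K :: "real^'d \<Rightarrow> int^'d" where K: "\<And>q. q \<in> Q \<Longrightarrow> grid_assign alpha t q = t + (\<chi> i. alpha * of_int (K q $ i))
           \<and> (\<forall>j. \<bar>q $ j - (t $ j + alpha * of_int (K q $ j))\<bar> < alpha / 2)"
    by metis
  have Kd: "\<bar>K p $ j - K q $ j\<bar> \<le> 1" if "p \<in> Q" "q \<in> Q" for p q j
  proof -
    have "\<bar>alpha * of_int (K p $ j) - alpha * of_int (K q $ j)\<bar> < 2 * alpha"
    proof -
      have "\<bar>p $ j - (t $ j + alpha * of_int (K p $ j))\<bar> < alpha / 2"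
        "\<bar>q $ j - (t $ j + alpha * of_int (K q $ j))\<bar> < alpha / 2"
        using K[OF that(1)] K[OF that(2)] by blast+
      thus ?thesis using diam[OF that, of j] by linarith
    qed
    hence "alpha * \<bar>of_int (K p $ j - K q $ j)\<bar> < alpha * 2"
      using apos by (simp add: abs_mult right_diff_distrib[symmetric] mult.commute)
    hence "\<bar>of_int (K p $ j - K q $ j)\<bar> < (2::real)" using apos by simp
    hence "\<bar>K p $ j - K q $ j\<bar> < 2" by linarith
    thus ?thesis by simp
  qed
  obtain p0 where p0: "p0 \<in> Q" using assms(6) by blast
  define kx :: "int^'d" where "kx = (\<chi> i. if \<exists>q\<in>Q. K q $ i < K p0 $ i then K p0 $ i - 1 else K p0 $ i)"
  define x where "x = t + (\<chi> i. alpha * of_int (kx $ i))"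
  define m :: "real^'d" where "m = (\<chi> i. alpha)"
  have xg: "x \<in> grid alpha t" unfolding grid_def x_def by blast
  have kr: "kx $ j \<le> K q $ j \<and> K q $ j \<le> kx $ j + 1" if "q \<in> Q" for q j
  proof (cases "\<exists>q\<in>Q. K q $ j < K p0 $ j")
    case True
    then obtain q' where "q' \<in> Q" "K q' $ j < K p0 $ j" by blast
    then show ?thesis using Kd[OF that p0, of j] Kd[OF that \<open>q' \<in> Q\<close>, of j] Kd[OF \<open>q' \<in> Q\<close> p0, of j]
      unfolding kx_def using True by auto
  next
    case False
    then show ?thesis using Kd[OF that p0, of j] that unfolding kx_def by auto
  qed
  have "grid_assign alpha t ` Q \<subseteq> cube_face alpha x m"
  proof
    fix y assume "y \<in> grid_assign alpha t ` Q"
    then obtain q where q: "q \<in> Q" "y = grid_assign alpha t q" by blast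
    have "x $ j \<le> y $ j \<and> y $ j \<le> x $ j + m $ j" for j
    proof -
      have "real_of_int (kx $ j) \<le> of_int (K q $ j)" "real_of_int (K q $ j) \<le> of_int (kx $ j) + 1"
        using kr[OF q(1), of j] by linarith+
      hence "alpha * of_int (kx $ j) \<le> alpha * of_int (K q $ j)"
        "alpha * of_int (K q $ j) \<le> alpha * of_int (kx $ j) + alpha"
        using apos mult_left_mono[of "real_of_int (K q $ j)" "of_int (kx $ j) + 1" alpha]
        by (simp_all add: mult_left_mono distrib_left)
      thus ?thesis using K[OF q(1)] q(2) unfolding x_def m_def by simp
    qed
    thus "y \<in> cube_face alpha x m" unfolding cube_face_def by blast
  qed
  moreover have "is_face alpha t (cube_face alpha x m)"
    unfolding is_face_def
  proof (intro exI conjI)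
    show "x \<in> grid alpha t" by (rule xg)
    show "\<forall>j. m $ j \<in> {0, alpha}" unfolding m_def by simp
  qed (rule refl)
  ultimately show ?thesis by blast
qed

end
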